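(* Let $(u,g,r,h)$ be a symmetric RUM-NCF in which each $g(x,y)$ is strictly positive on $\mathbb{R}$, and let $(p,f)$ be an SCF-RT generated by it. Then for any $(x,y)\in D$, with $q=p(x,y)/p(y,x)$: if $u(x)\geq u(y)$ then $F(y,x)$ $q$-FSD $F(x,y)$, and if $u(x)>u(y)$ then $F(y,x)$ $q$-SFSD $F(x,y)$.
   Context: $X$ is a finite set of options; $C=\{(x,y): x,y\in X,\ x\neq y\}$; $D\subseteq C$ is a fixed non-empty set with $(x,y)\in D\Rightarrow (y,x)\in D$. An SCF $p$ assigns to each $(x,y)\in D$ a number $p(x,y)>0$ with $p(x,y)+p(y,x)=1$. An SCF-RT is a pair $(p,f)$ where $p$ is an SCF and $f$ assigns to each $(x,y)\in D$ a strictly positive density $f(x,y)$ on $\mathbb{R}^+$ with cdf $F(x,y)$. A RUM is a pair $(u,g)$ with $u:X\to\mathbb{R}$ and $g$ assigning to each $(x,y)\in C$ a density $g(x,y)$ on $\mathbb{R}$ (cdf $G(x,y)$) with $\int v\,g(x,y)(v)\,dv=u(x)-u(y)=:v(x,y)$, $g(x,y)(v)=g(y,x)(-v)$ for all $v$, and connected support. A RUM-CF is $(u,g,r)$ with $(u,g)$ a RUM and $r:\mathbb{R}^{++}\to\mathbb{R}^+$ continuous, strictly decreasing where $r(v)>0$, $\lim_{v\to0}r(v)=\infty$, $\lim_{v\to\infty}r(v)=0$; $r^{-1}(t)$ ($t>0$) is the inverse of $r$ restricted to $\{r>0\}$. It is symmetric if $g(x,y)(v(x,y)+\delta)=g(x,y)(v(x,y)-\delta)$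 for all $(x,y)\in C$, $\delta\geq0$. A random utility model with a noisy chronometric function (RUM-NCF) is $(u,g,r,h)$ where $(u,g,r)$ is a RUM-CF and $h$ is a density on $\mathbb{R}^+$ of a non-negative random variable $\tilde\eta$ with mean one; the response time for realized utility difference $v$ is $r(|v|)\cdot\tilde\eta$ with $\tilde\eta$ independent. It is symmetric if $(u,g,r)$ is. An SCF-RT $(p,f)$ is generated by $(u,g,r,h)$ if for all $(x,y)\in D$: $p(y,x)=G(x,y)(0)$ and $F(x,y)(t)=\frac{\int_0^\infty[1-G(x,y)(r^{-1}(t/\eta))]h(\eta)\,d\eta}{1-G(x,y)(0)}$ for all $t>0$. For cdfs $G,H$ on $\mathbb{R}^+$ and $q>0$, $G$ $q$-FSD $H$ means $G(t)\leq qH(t)$ for all $t\geq0$; $q$-SFSD means additionally strict inequality for some $t$. *)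

theory Defs
  imports "HOL-Analysis.Analysis"
begin

definition pairs_C :: "'a set \<Rightarrow> ('a \<times> 'a) set" where
  "pairs_C X = {(x, y). x \<in> X \<and> y \<in> X \<and> x \<noteq> y}"

definition valid_D :: "'a set \<Rightarrow> ('a \<times> 'a) set \<Rightarrow> bool" where
  "valid_D X D \<longleftrightarrow> finite X \<and> D \<subseteq> pairs_C X \<and> D \<noteq> {} \<and>
     (\<forall>x y. (x, y) \<in> D \<longrightarrow> (y, x) \<in> D)"

definition density_R :: "(real \<Rightarrow> real) \<Rightarrow> bool" where
  "density_R g \<longleftrightarrow> g \<in> borel_measurable borel \<and> (\<forall>v. 0 \<le> g v) \<and>
     integrable lborel g \<and> integral\<^sup>L lborel g = 1"

text \<open>A probability density on R+ = [0,oo) (values on negative reals are irrelevant).\<close>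
definition density_Rplus :: "(real \<Rightarrow> real) \<Rightarrow> bool" where
  "density_Rplus f \<longleftrightarrow> f \<in> borel_measurable borel \<and> (\<forall>v\<ge>0. 0 \<le> f v) \<and>
     set_integrable lborel {0..} f \<and> (LINT v:{0..}|lborel. f v) = 1"

definition cdf_R :: "(real \<Rightarrow> real) \<Rightarrow> real \<Rightarrow> real" where
  "cdf_R g t = (LINT v:{..t}|lborel. g v)"

definition cdf_Rplus :: "(real \<Rightarrow> real) \<Rightarrow> real \<Rightarrow> real" where
  "cdf_Rplus f t = (LINT v:{0..t}|lborel. f v)"

definition supp_dens :: "(real \<Rightarrow> real) \<Rightarrow> real set" where
  "supp_dens g = {v. g v \<noteq> 0}"

definition SCF :: "('a \<times> 'a) set \<Rightarrow> ('a \<Rightarrow> 'a \<Rightarrow> real) \<Rightarrow> bool" where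
  "SCF D p \<longleftrightarrow> (\<forall>(x, y)\<in>D. p x y > 0 \<and> p x y + p y x = 1)"

definition SCF_RT :: "('a \<times> 'a) set \<Rightarrow> ('a \<Rightarrow> 'a \<Rightarrow> real) \<Rightarrow> ('a \<Rightarrow> 'a \<Rightarrow> real \<Rightarrow> real) \<Rightarrow> bool" where
  "SCF_RT D p f \<longleftrightarrow> SCF D p \<and>
     (\<forall>(x, y)\<in>D. density_Rplus (f x y) \<and> (\<forall>t\<ge>0. f x y t > 0))"

definition RUM :: "'a set \<Rightarrow> ('a \<Rightarrow> real) \<Rightarrow> ('a \<Rightarrow> 'a \<Rightarrow> real \<Rightarrow> real) \<Rightarrow> bool" where
  "RUM X u g \<longleftrightarrow> (\<forall>(x, y)\<in>pairs_C X.
      density_R (g x y) \<and>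
      integrable lborel (\<lambda>v. v * g x y v) \<and>
      integral\<^sup>L lborel (\<lambda>v. v * g x y v) = u x - u y \<and>
      (\<forall>v. g x y v = g y x (- v)) \<and>
      is_interval (supp_dens (g x y)))"

definition chronometric :: "(real \<Rightarrow> real) \<Rightarrow> bool" where
  "chronometric r \<longleftrightarrow> (\<forall>v>0. 0 \<le> r v) \<and> continuous_on {0<..} r \<and>
     (\<forall>a b. 0 < a \<longrightarrow> a < b \<longrightarrow> r a > 0 \<longrightarrow> r b > 0 \<longrightarrow> r b < r a) \<and>
     filterlim r at_top (at_right 0) \<and> (r \<longlongrightarrow> 0) at_top"

text \<open>inverse of r restricted to the set where r is positive (used for t > 0)\<close>
definition rinv :: "(real \<Rightarrow> real) \<Rightarrow> real \<Rightarrow> real" where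
  "rinv r t = (THE v. v > 0 \<and> r v > 0 \<and> r v = t)"

definition RUM_CF :: "'a set \<Rightarrow> ('a \<Rightarrow> real) \<Rightarrow> ('a \<Rightarrow> 'a \<Rightarrow> real \<Rightarrow> real) \<Rightarrow> (real \<Rightarrow> real) \<Rightarrow> bool" where
  "RUM_CF X u g r \<longleftrightarrow> RUM X u g \<and> chronometric r"

definition symmetric_RUM_CF :: "'a set \<Rightarrow> ('a \<Rightarrow> real) \<Rightarrow> ('a \<Rightarrow> 'a \<Rightarrow> real \<Rightarrow> real) \<Rightarrow> (real \<Rightarrow> real) \<Rightarrow> bool" where
  "symmetric_RUM_CF X u g r \<longleftrightarrow> RUM_CF X u g r \<and>
     (\<forall>(x, y)\<in>pairs_C X. \<forall>\<delta>\<ge>0. g x y (u x - u y + \<delta>) = g x y (u x - u y - \<delta>))"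

definition noise_density :: "(real \<Rightarrow> real) \<Rightarrow> bool" where
  "noise_density h \<longleftrightarrow> density_Rplus h \<and>
     set_integrable lborel {0..} (\<lambda>\<eta>. \<eta> * h \<eta>) \<and> (LINT \<eta>:{0..}|lborel. \<eta> * h \<eta>) = 1"

definition RUM_NCF :: "'a set \<Rightarrow> ('a \<Rightarrow> real) \<Rightarrow> ('a \<Rightarrow> 'a \<Rightarrow> real \<Rightarrow> real) \<Rightarrow> (real \<Rightarrow> real) \<Rightarrow> (real \<Rightarrow> real) \<Rightarrow> bool" where
  "RUM_NCF X u g r h \<longleftrightarrow> RUM_CF X u g r \<and> noise_density h"

definition symmetric_RUM_NCF :: "'a set \<Rightarrow> ('a \<Rightarrow> real) \<Rightarrow> ('a \<Rightarrow> 'a \<Rightarrow> real \<Rightarrow> real) \<Rightarrow> (real \<Rightarrow> real) \<Rightarrow> (real \<Rightarrow> real) \<Rightarrow> bool" where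
  "symmetric_RUM_NCF X u g r h \<longleftrightarrow> RUM_NCF X u g r h \<and> symmetric_RUM_CF X u g r"

definition generated_by_NCF ::
  "('a \<times> 'a) set \<Rightarrow> ('a \<Rightarrow> 'a \<Rightarrow> real) \<Rightarrow> ('a \<Rightarrow> 'a \<Rightarrow> real \<Rightarrow> real) \<Rightarrow>
   ('a \<Rightarrow> real) \<Rightarrow> ('a \<Rightarrow> 'a \<Rightarrow> real \<Rightarrow> real) \<Rightarrow> (real \<Rightarrow> real) \<Rightarrow> (real \<Rightarrow> real) \<Rightarrow> bool" where
  "generated_by_NCF D p f u g r h \<longleftrightarrow> (\<forall>(x, y)\<in>D.
     p y x = cdf_R (g x y) 0 \<and>
     (\<forall>t>0. cdf_Rplus (f x y) t =
        (LINT \<eta>:{0<..}|lborel. (1 - cdf_R (g x y) (rinv r (t / \<eta>))) * h \<eta>)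
          / (1 - cdf_R (g x y) 0)))"

definition q_FSD :: "real \<Rightarrow> (real \<Rightarrow> real) \<Rightarrow> (real \<Rightarrow> real) \<Rightarrow> bool" where
  "q_FSD q G H \<longleftrightarrow> (\<forall>t\<ge>0. G t \<le> q * H t)"

definition q_SFSD :: "real \<Rightarrow> (real \<Rightarrow> real) \<Rightarrow> (real \<Rightarrow> real) \<Rightarrow> bool" where
  "q_SFSD q G H \<longleftrightarrow> q_FSD q G H \<and> (\<exists>t\<ge>0. G t < q * H t)"

end

theory Submission
  imports Defs
begin

lemma int_pos_lemma:
  fixes F :: "real \<Rightarrow> real"
  assumes ab: "a < b" and sub: "{a<..b} \<subseteq> A" and A: "A \<in> sets lborel"
    and pos: "\<forall>w\<in>A. F w > 0"
    and int: "integrable lborel (\<lambda>w. indicator A w * F w)"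
  shows "(\<integral>w. indicator A w * F w \<partial>lborel) > 0"
proof -
  have nn: "AE w in lborel. 0 \<le> indicator A w * F w"
    using pos by (auto split: split_indicator intro!: less_imp_le)
  have ge: "(\<integral>w. indicator A w * F w \<partial>lborel) \<ge> 0"
    by (rule integral_nonneg_AE[OF nn])
  show ?thesis
  proof (rule ccontr)
    assume "\<not> ?thesis"
    with ge have "(\<integral>w. indicator A w * F w \<partial>lborel) = 0" by simp
    then have "AE w in lborel. indicator A w * F w = 0"
      using integral_nonneg_eq_0_iff_AE[OF int nn] by simp
    then have "AE w in lborel. w \<notin> {a<..b}"
    proof (rule AE_mp)
      show "AE w in lborel. indicator A w * F w = 0 \<longrightarrow> w \<notin> {a<..b}"
        using pos sub by (intro AE_I2) (auto split: split_indicator)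
    qed
    then have "emeasure lborel {a<..b} = 0"
      by (subst (asm) AE_iff_measurable[where N="{a<..b}"]) auto
    with ab show False by simp
  qed
qed

lemma tail_lemma:
  assumes "density_R G"
  shows "1 - cdf_R G s = (\<integral>w. indicator {s<..} w * G w \<partial>lborel)"
proof -
  have m: "G \<in> borel_measurable borel" and i: "integrable lborel G" and one: "integral\<^sup>L lborel G = 1"
    using assms unfolding density_R_def by auto
  have i2: "integrable lborel (\<lambda>w. indicator {..s} w * G w)"
    using integrable_mult_indicator[of "{..s}" lborel G] i by simp
  have "1 - cdf_R G s = integral\<^sup>L lborel G - (\<integral>w. indicator {..s} w * G w \<partial>lborel)"
    unfolding cdf_R_def set_lebesgue_integral_def one by simp
  also have "\<dots> = (\<integral>w. G w - indicator {..s} w * G w \<partial>lborel)"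
    using Bochner_Integration.integral_diff[OF i i2] by simp
  also have "\<dots> = (\<integral>w. indicator {s<..} w * G w \<partial>lborel)"
    by (rule Bochner_Integration.integral_cong) (auto split: split_indicator)
  finally show ?thesis .
qed

lemma affine_reflect:
  fixes F :: "real \<Rightarrow> real"
  shows "(\<integral>w. F w \<partial>lborel) = (\<integral>z. F (c - z) \<partial>lborel)"
  by (subst lborel_integral_real_affine[where c="-1" and t=c]) auto

theorem proposition5:
  fixes X :: "'a set" and D :: "('a \<times> 'a) set"
    and u :: "'a \<Rightarrow> real" and g :: "'a \<Rightarrow> 'a \<Rightarrow> real \<Rightarrow> real"
    and r :: "real \<Rightarrow> real" and h :: "real \<Rightarrow> real"
    and p :: "'a \<Rightarrow> 'a \<Rightarrow> real" and f :: "'a \<Rightarrow> 'a \<Rightarrow> real \<Rightarrow> real"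
    and x y :: 'a
  assumes "valid_D X D"
    and "symmetric_RUM_NCF X u g r h"
    and "\<forall>(a, b)\<in>pairs_C X. \<forall>v. g a b v > 0"
    and "SCF_RT D p f"
    and "generated_by_NCF D p f u g r h"
    and "(x, y) \<in> D"
  shows "(u x \<ge> u y \<longrightarrow> q_FSD (p x y / p y x) (cdf_Rplus (f y x)) (cdf_Rplus (f x y))) \<and>
         (u x > u y \<longrightarrow> q_SFSD (p x y / p y x) (cdf_Rplus (f y x)) (cdf_Rplus (f x y)))"
proof -
  note A = assms
  have yxD: "(y, x) \<in> D" using A(1,6) unfolding valid_D_def by blast
  have xyC: "(x, y) \<in> pairs_C X" and yxC: "(y, x) \<in> pairs_C X"
    using A(1,6) yxD unfolding valid_D_def by blast+
  have RUM: "RUM X u g" and symm: "symmetric_RUM_CF X u g r" and nd: "noise_density h"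
    using A(2) unfolding symmetric_RUM_NCF_def RUM_NCF_def RUM_CF_def by auto
  define v where "v = u x - u y"
  define G where "G = g x y"
  have dG: "density_R G" and gyx: "\<forall>w. G w = g y x (- w)"
    using RUM xyC unfolding RUM_def G_def by auto
  have dG': "density_R (g y x)" using RUM yxC unfolding RUM_def by auto
  have Gm: "G \<in> borel_measurable borel" and Gi: "integrable lborel G"
    using dG unfolding density_R_def by auto
  have Gsym: "\<forall>\<delta>\<ge>0. G (v + \<delta>) = G (v - \<delta>)"
    using symm xyC unfolding symmetric_RUM_CF_def G_def v_def by auto
  have refl: "G w = G (2 * v - w)" for w
  proof (cases "w \<ge> v")
    case True
    then show ?thesis using Gsym[rule_format, of "w - v"] by simp
  next
    case False
    then show ?thesis using Gsym[rule_format, of "v - w"] by simp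
  qed
  have Gpos: "\<forall>w. G w > 0" using A(3) xyC unfolding G_def by auto
  have hdens: "density_Rplus h" using nd unfolding noise_density_def by auto
  have hm: "h \<in> borel_measurable borel" and hnn: "\<forall>e\<ge>0. 0 \<le> h e"
    and h1: "(LINT e:{0..}|lborel. h e) = 1"
    using hdens unfolding density_Rplus_def by auto
  have scf: "SCF D p" and fxy: "density_Rplus (f x y)" "\<forall>t\<ge>0. f x y t > 0"
    and fyx: "density_Rplus (f y x)" "\<forall>t\<ge>0. f y x t > 0"
    using A(4,6) yxD unfolding SCF_RT_def by auto
  have pxy: "p x y > 0" "p x y + p y x = 1" and pyx: "p y x > 0"
    using scf A(6) yxD unfolding SCF_def by auto
  have gen1: "p y x = cdf_R G 0" "\<forall>t>0. cdf_Rplus (f x y) t =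
        (LINT \<eta>:{0<..}|lborel. (1 - cdf_R G (rinv r (t / \<eta>))) * h \<eta>) / (1 - cdf_R G 0)"
    using A(5,6) unfolding generated_by_NCF_def G_def by auto
  have gen2: "p x y = cdf_R (g y x) 0" "\<forall>t>0. cdf_Rplus (f y x) t =
        (LINT \<eta>:{0<..}|lborel. (1 - cdf_R (g y x) (rinv r (t / \<eta>))) * h \<eta>) / (1 - cdf_R (g y x) 0)"
    using A(5) yxD unfolding generated_by_NCF_def by auto
  have den1: "1 - cdf_R G 0 = p x y" using gen1(1) pxy by simp
  have den2: "1 - cdf_R (g y x) 0 = p y x" using gen2(1) pxy by simp

  define P where "P s = 1 - cdf_R G s" for s
  define Q where "Q s = 1 - cdf_R (g y x) s" for s
  have Peq: "P s = (\<integral>w. indicator {s<..} w * G w \<partial>lborel)" for s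
    unfolding P_def by (rule tail_lemma[OF dG])
  have Qeq: "Q s = (\<integral>w. indicator {2 * v + s<..} w * G w \<partial>lborel)" for s
  proof -
    have "Q s = (\<integral>w. indicator {s<..} w * g y x w \<partial>lborel)"
      unfolding Q_def by (rule tail_lemma[OF dG'])
    also have "\<dots> = (\<integral>z. indicator {s<..} (0 - z) * g y x (0 - z) \<partial>lborel)"
      by (rule affine_reflect)
    also have "\<dots> = (\<integral>z. indicator {..< -s} z * G z \<partial>lborel)"
      using gyx by (intro Bochner_Integration.integral_cong) (auto split: split_indicator)
    also have "\<dots> = (\<integral>z. indicator {..< -s} (2 * v - z) * G (2 * v - z) \<partial>lborel)"
      by (rule affine_reflect)
    also have "\<dots> = (\<integral>w. indicator {2 * v + s<..} w * G w \<partial>lborel)"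
      using refl[symmetric] by (intro Bochner_Integration.integral_cong) (auto split: split_indicator)
    finally show ?thesis .
  qed
  have intI: "integrable lborel (\<lambda>w. indicator S w * G w)" if "S \<in> sets lborel" for S
    using integrable_mult_indicator[of S lborel G] Gi that by simp
  have PQdiff: "P s - Q s = (\<integral>w. indicator {s<..2 * v + s} w * G w \<partial>lborel)" if "v \<ge> 0" for s
  proof -
    have "P s - Q s = (\<integral>w. indicator {s<..} w * G w - indicator {2 * v + s<..} w * G w \<partial>lborel)"
      unfolding Peq Qeq by (rule Bochner_Integration.integral_diff[symmetric]) (auto intro: intI)
    also have "\<dots> = (\<integral>w. indicator {s<..2 * v + s} w * G w \<partial>lborel)"
      using that by (intro Bochner_Integration.integral_cong) (auto split: split_indicator)
    finally show ?thesis .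
  qed
  have QP: "Q s \<le> P s" if "v \<ge> 0" for s
  proof -
    have "0 \<le> (\<integral>w. indicator {s<..2 * v + s} w * G w \<partial>lborel)"
      using Gpos by (intro integral_nonneg_AE AE_I2) (auto split: split_indicator intro: less_imp_le)
    then show ?thesis using PQdiff[OF that, of s] by simp
  qed
  have QPs: "Q s < P s" if "v > 0" for s
  proof -
    have "0 < (\<integral>w. indicator {s<..2 * v + s} w * G w \<partial>lborel)"
      using that Gpos by (intro int_pos_lemma[where a=s and b="2 * v + s"] intI) auto
    then show ?thesis using PQdiff[of s] that by simp
  qed
  have cdfpos: "cdf_Rplus F t > 0" if "t > 0" "density_Rplus F" "\<forall>t\<ge>0. F t > 0" for F t
  proof -
    have Fi: "integrable lborel (\<lambda>w. indicator {0..} w * F w)"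
      using that(2) unfolding density_Rplus_def set_integrable_def by simp
    have "integrable lborel (\<lambda>w. indicator {0..t} w * (indicator {0..} w * F w))"
      using integrable_mult_indicator[OF _ Fi, of "{0..t}"] by simp
    then have Fi2: "integrable lborel (\<lambda>w. indicator {0..t} w * F w)"
      by (rule Bochner_Integration.integrable_cong[THEN iffD1, rotated -1]) (auto split: split_indicator)
    have "0 < (\<integral>w. indicator {0..t} w * F w \<partial>lborel)"
      using that by (intro int_pos_lemma[where a=0 and b=t] Fi2) auto
    then show ?thesis unfolding cdf_Rplus_def set_lebesgue_integral_def by simp
  qed
  have cdf0: "cdf_Rplus F 0 = 0" for F
  proof -
    have "AE w in lborel. indicator {0..0::real} w * F w = 0"
      using AE_lborel_singleton[of "0::real"] by eventually_elim auto
    then show ?thesis unfolding cdf_Rplus_def set_lebesgue_integral_def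
      by (simp add: integral_eq_zero_AE)
  qed
  define a1 where "a1 t e = indicator {0<..} e * (P (rinv r (t / e)) * h e)" for t e
  define a2 where "a2 t e = indicator {0<..} e * (Q (rinv r (t / e)) * h e)" for t e
  have F1: "cdf_Rplus (f x y) t = integral\<^sup>L lborel (a1 t) / p x y" if "t > 0" for t
    using gen1(2) that unfolding den1 a1_def P_def set_lebesgue_integral_def by simp
  have F2: "cdf_Rplus (f y x) t = integral\<^sup>L lborel (a2 t) / p y x" if "t > 0" for t
    using gen2(2) that unfolding den2 a2_def Q_def set_lebesgue_integral_def by simp
  have i1: "integrable lborel (a1 t)" if "t > 0" for t
  proof (rule ccontr)
    assume "\<not> ?thesis"
    then have "integral\<^sup>L lborel (a1 t) = 0" by (rule not_integrable_integral_eq)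
    then show False using F1[OF that] cdfpos[OF that fxy] by simp
  qed
  have i2: "integrable lborel (a2 t)" if "t > 0" for t
  proof (rule ccontr)
    assume "\<not> ?thesis"
    then have "integral\<^sup>L lborel (a2 t) = 0" by (rule not_integrable_integral_eq)
    then show False using F2[OF that] cdfpos[OF that fyx] by simp
  qed
  have a21: "a2 t e \<le> a1 t e" if "v \<ge> 0" for t e
    unfolding a1_def a2_def using QP[OF that] hnn
    by (auto split: split_indicator intro!: mult_right_mono)
  have key: "cdf_Rplus (f y x) t - p x y / p y x * cdf_Rplus (f x y) t
      = (integral\<^sup>L lborel (a2 t) - integral\<^sup>L lborel (a1 t)) / p y x" if "t > 0" for t
    using F1[OF that] F2[OF that] pxy pyx by (simp add: field_simps)
  have FSD: "q_FSD (p x y / p y x) (cdf_Rplus (f y x)) (cdf_Rplus (f x y))" if "v \<ge> 0"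
    unfolding q_FSD_def
  proof (intro allI impI)
    fix t :: real assume "t \<ge> 0"
    show "cdf_Rplus (f y x) t \<le> p x y / p y x * cdf_Rplus (f x y) t"
    proof (cases "t = 0")
      case True then show ?thesis by (simp add: cdf0)
    next
      case False
      then have t: "t > 0" using \<open>t \<ge> 0\<close> by simp
      have "integral\<^sup>L lborel (a2 t) \<le> integral\<^sup>L lborel (a1 t)"
        by (rule integral_mono[OF i2[OF t] i1[OF t]]) (rule a21[OF that])
      then have "(integral\<^sup>L lborel (a2 t) - integral\<^sup>L lborel (a1 t)) / p y x \<le> 0"
        using pyx by (simp add: divide_nonpos_pos)
      then show ?thesis using key[OF t] by simp
    qed
  qed
  have SFSD: "q_SFSD (p x y / p y x) (cdf_Rplus (f y x)) (cdf_Rplus (f x y))" if "v > 0"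
    unfolding q_SFSD_def
  proof (intro conjI exI[of _ 1])
    show "q_FSD (p x y / p y x) (cdf_Rplus (f y x)) (cdf_Rplus (f x y))"
      using FSD that by simp
    have dint: "integrable lborel (\<lambda>e. a1 1 e - a2 1 e)"
      using i1 i2 by simp
    have dnn: "AE e in lborel. 0 \<le> a1 1 e - a2 1 e"
      using a21 that by (intro AE_I2) (simp add: less_imp_le)
    have "integral\<^sup>L lborel (\<lambda>e. a1 1 e - a2 1 e) \<noteq> 0"
    proof
      assume "integral\<^sup>L lborel (\<lambda>e. a1 1 e - a2 1 e) = 0"
      then have "AE e in lborel. a1 1 e - a2 1 e = 0"
        using integral_nonneg_eq_0_iff_AE[OF dint dnn] by simp
      then have "AE e in lborel. indicator {0..} e * h e = 0"
        using AE_lborel_singleton[of "0::real"]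
      proof eventually_elim
        case (elim e)
        show ?case
        proof (cases "e > 0")
          case True
          have "a1 1 e - a2 1 e = (P (rinv r (1 / e)) - Q (rinv r (1 / e))) * h e"
            unfolding a1_def a2_def using True by (simp add: algebra_simps)
          moreover have "P (rinv r (1 / e)) - Q (rinv r (1 / e)) > 0" using QPs[OF that] by simp
          ultimately show ?thesis using elim(1) by simp
        next
          case False
          then show ?thesis using elim(2) by (simp split: split_indicator)
        qed
      qed
      then have "(LINT e:{0..}|lborel. h e) = 0"
        unfolding set_lebesgue_integral_def by (simp add: integral_eq_zero_AE)
      then show False using h1 by simp
    qed
    moreover have "integral\<^sup>L lborel (\<lambda>e. a1 1 e - a2 1 e) \<ge> 0"
      by (rule integral_nonneg_AE[OF dnn])
    ultimately have "integral\<^sup>L lborel (\<lambda>e. a1 1 e - a2 1 e) > 0" by simp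
    then have "integral\<^sup>L lborel (a2 1) < integral\<^sup>L lborel (a1 1)"
      using Bochner_Integration.integral_diff[OF i1 i2, of 1] by simp
    then have "(integral\<^sup>L lborel (a2 1) - integral\<^sup>L lborel (a1 1)) / p y x < 0"
      using pyx by (simp add: divide_neg_pos)
    then show "cdf_Rplus (f y x) 1 < p x y / p y x * cdf_Rplus (f x y) 1"
      using key[of 1] by simp
  qed simp
  show ?thesis using FSD SFSD unfolding v_def by auto
qed

end
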